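(* Let $(x_n)\in\ell_1$ and let $I$ be a maximal ideal on $\mathbb{N}$. If $A(x_n)$ is nonmeager in $\mathbb{R}$, then $A_I(x_n)$ is nonmeager. If $\lambda^{*}(A(x_n))>0$ and $A_I(x_n)$ is Lebesgue measurable, then $\lambda^{*}(A_I(x_n))>0$, where $\lambda^{*}$ is Lebesgue outer measure.
   Context: An ideal on $\mathbb{N}$ is a family $I\subseteq P(\mathbb{N})$ closed under finite unions and subsets with $\mathbb{N}\notin I$; it is maximal if for every $A\subseteq\mathbb{N}$ either $A\in I$ or $\mathbb{N}\setminus A\in I$. $A(x_n)=\{\sum_{n\in A}x_n : A\subseteq\mathbb{N}\}$, $A_I(x_n)=\{\sum_{n\in A}x_n : A\in I\}$. *)

theory Defs
  imports "HOL-Analysis.Analysis"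
begin

definition ideal_on_nat :: "nat set set \<Rightarrow> bool" where
  "ideal_on_nat I \<longleftrightarrow>
     (\<forall>A\<in>I. \<forall>B\<in>I. A \<union> B \<in> I) \<and>
     (\<forall>A\<in>I. \<forall>B. B \<subseteq> A \<longrightarrow> B \<in> I) \<and>
     UNIV \<notin> I"

definition maximal_ideal_on_nat :: "nat set set \<Rightarrow> bool" where
  "maximal_ideal_on_nat I \<longleftrightarrow> ideal_on_nat I \<and> (\<forall>A. A \<in> I \<or> - A \<in> I)"

definition subsums :: "(nat \<Rightarrow> real) \<Rightarrow> real set" where
  "subsums x = {infsum x A | A. True}"

definition subsums_ideal :: "nat set set \<Rightarrow> (nat \<Rightarrow> real) \<Rightarrow> real set" where
  "subsums_ideal I x = {infsum x A | A. A \<in> I}"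

definition nowhere_dense :: "'a::topological_space set \<Rightarrow> bool" where
  "nowhere_dense S \<longleftrightarrow> interior (closure S) = {}"

definition meager :: "'a::topological_space set \<Rightarrow> bool" where
  "meager S \<longleftrightarrow> (\<exists>F :: nat \<Rightarrow> 'a set. (\<forall>n. nowhere_dense (F n)) \<and> S \<subseteq> (\<Union>n. F n))"

end

theory Submission
  imports Defs
begin

lemma nd_reflect:
  fixes F :: "real set"
  assumes "nowhere_dense F"
  shows "nowhere_dense ((\<lambda>t. s - t) ` F)"
proof -
  have e: "(\<lambda>t. s - t) ` G = (+) s ` (uminus ` G)" for G :: "real set"
    by (auto simp: image_image)
  have c: "closure (uminus ` G) = uminus ` closure G" for G :: "real set"
    by (rule closure_injective_linear_image[symmetric]) (auto simp: linear_uminus inj_def)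
  show ?thesis using assms
    unfolding nowhere_dense_def e
    by (simp add: closure_translation c interior_translation interior_negations)
qed

lemma subsums_cover:
  fixes x :: "nat \<Rightarrow> real"
  assumes l1: "summable (\<lambda>n. \<bar>x n\<bar>)" and max: "maximal_ideal_on_nat I"
  shows "subsums x \<subseteq> subsums_ideal I x \<union> (\<lambda>t. infsum x UNIV - t) ` subsums_ideal I x"
proof
  fix y assume "y \<in> subsums x"
  then obtain A where y: "y = infsum x A" by (auto simp: subsums_def)
  have su: "x summable_on UNIV"
    using norm_summable_imp_summable_on[of x] l1 by simp
  have sA: "x summable_on B" for B
    by (rule summable_on_subset_banach[OF su]) auto
  have split: "infsum x UNIV = infsum x A + infsum x (-A)"
    using infsum_Un_disjoint[OF sA sA, of A "-A"] by (simp add: Un_commute)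
  from max have "A \<in> I \<or> -A \<in> I" by (auto simp: maximal_ideal_on_nat_def)
  then show "y \<in> subsums_ideal I x \<union> (\<lambda>t. infsum x UNIV - t) ` subsums_ideal I x"
  proof
    assume "A \<in> I" then show ?thesis using y by (auto simp: subsums_ideal_def)
  next
    assume "-A \<in> I"
    then have "infsum x (-A) \<in> subsums_ideal I x" by (auto simp: subsums_ideal_def)
    moreover have "y = infsum x UNIV - infsum x (-A)" using y split by simp
    ultimately show ?thesis by blast
  qed
qed

theorem mainTheorem16:
  fixes x :: "nat \<Rightarrow> real" and I :: "nat set set"
  assumes l1: "summable (\<lambda>n. \<bar>x n\<bar>)"
    and max: "maximal_ideal_on_nat I"
  shows "(\<not> meager (subsums x) \<longrightarrow> \<not> meager (subsums_ideal I x))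
       \<and> ((outer_measure_of lebesgue (subsums x) > 0 \<and> subsums_ideal I x \<in> sets lebesgue)
           \<longrightarrow> outer_measure_of lebesgue (subsums_ideal I x) > 0)"
proof -
  define S where "S = infsum x UNIV"
  define \<phi> where "\<phi> = (\<lambda>t::real. S - t)"
  define B where "B = subsums_ideal I x"
  have cov: "subsums x \<subseteq> B \<union> \<phi> ` B"
    using subsums_cover[OF l1 max] unfolding S_def \<phi>_def B_def .
  have part1: "meager B \<Longrightarrow> meager (subsums x)"
  proof -
    assume "meager B"
    then obtain F :: "nat \<Rightarrow> real set" where F: "\<forall>n. nowhere_dense (F n)" "B \<subseteq> (\<Union>n. F n)"
      unfolding meager_def by auto
    define G where "G n = (if even n then F (n div 2) else \<phi> ` F (n div 2))" for n
    have "\<forall>n. nowhere_dense (G n)"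
      using F(1) nd_reflect unfolding G_def \<phi>_def by auto
    moreover have "subsums x \<subseteq> (\<Union>n. G n)"
    proof
      fix y assume "y \<in> subsums x"
      with cov have "y \<in> B \<or> y \<in> \<phi> ` B" by auto
      then show "y \<in> (\<Union>n. G n)"
      proof
        assume "y \<in> B"
        then obtain n where "y \<in> F n" using F(2) by auto
        then have "y \<in> G (2*n)" by (simp add: G_def)
        then show ?thesis by blast
      next
        assume "y \<in> \<phi> ` B"
        then obtain z n where "z \<in> F n" "y = \<phi> z" using F(2) by auto
        then have "y \<in> G (2*n+1)" by (simp add: G_def)
        then show ?thesis by blast
      qed
    qed
    ultimately show "meager (subsums x)" unfolding meager_def by blast
  qed
  have part2: "outer_measure_of lebesgue (subsums x) = 0"
    if Bm: "B \<in> sets lebesgue" and B0: "outer_measure_of lebesgue B = 0"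
  proof -
    have e0: "emeasure lebesgue B = 0" using Bm B0 by simp
    have pm: "\<phi> ` B \<in> sets lebesgue"
      by (rule differentiable_image_in_sets_lebesgue[OF Bm]) (auto simp: \<phi>_def)
    have "\<phi> ` B = (\<lambda>t. (-1) *\<^sub>R t + S) ` B" by (auto simp: \<phi>_def)
    then have "emeasure lebesgue (\<phi> ` B) = 0"
      using emeasure_lebesgue_affine[of "-1" S B] e0 by simp
    then have "emeasure lebesgue (B \<union> \<phi> ` B) = 0"
      using e0 Bm pm by (metis emeasure_Un_null_set null_setsI)
    then have "outer_measure_of lebesgue (B \<union> \<phi> ` B) = 0" using Bm pm by simp
    then show ?thesis using outer_measure_of_mono[OF cov, of lebesgue]
      by (simp add: le_zero_eq)
  qed
  show ?thesis
    unfolding B_def[symmetric]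
    using part1 part2 by (auto simp: zero_less_iff_neq_zero)
qed

end
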